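(* Let $\sigma$ be a (nonempty) input sequence of List Update with Time Windows and let $\sigma'$ be the sequence obtained from $\sigma$ by omitting all requests that are not triggering requests with respect to ALG run on $\sigma$. Then $$\frac{ALG(\sigma)}{OPT(\sigma)}\le\frac{ALG(\sigma')}{OPT(\sigma')}.$$
   Context: List Update with Time Windows. A set $\mathbb{E}$ of $n$ elements is kept in an ordered list (position $1$ is the head). An input $\sigma$ is a sequence of requests $r_1,\dots,r_m$; request $r_k$ specifies an element $e_k\in\mathbb{E}$, an arrival time $a_k$ and a deadline $q_k\ge a_k$. At any time an algorithm may (a) perform an access up to position $i$, at cost $i$, which serves every pending request (arrived and not yet served) whose element currently lies in positions $1,\dots,i$; (b) swap two adjacent elements at cost $1$. Actions are instantaneous. Every request must be served at some time in $[a_k,q_k]$. Cost = total access cost + number of swaps. $OPT(\sigma)$ is the minimum cost of an offline feasible solution from the same initial list. Algorithm ALG: whenever the current time equals the deadline of at least one pending request, let the triggering element be the element at the largest current position among those elements having a pending request whose deadline is the current time, and let $i$ be its position. ALG accesses the first $\min(2i-1,n)$ positions and then moves the triggering element to the front by $i-1$ adjacent swaps. At each such event, the triggering request is one (arbitrarily fixed) pending request for the triggering element whose deadline is the current time. A request of $\sigma$ is a triggering request (with respect to ALG) if it is the triggering request of some event of ALG on $\sigma$. *)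

theory Defs
  imports Complex_Main
begin

type_synonym 'a req = "'a \<times> real \<times> real"

definition elem :: "'a req \<Rightarrow> 'a" where "elem r = fst r"
definition arr :: "'a req \<Rightarrow> real" where "arr r = fst (snd r)"
definition dl :: "'a req \<Rightarrow> real" where "dl r = snd (snd r)"

(* 1-based position of x in the list xs *)
definition pos :: "'a list \<Rightarrow> 'a \<Rightarrow> nat" where
  "pos xs x = length (takeWhile (\<lambda>y. y \<noteq> x) xs) + 1"

(* Access i: access up to position i (cost i);
   Swp j: swap the adjacent elements at positions j and j+1 (cost 1). *)
datatype action = Access nat | Swp nat

definition swap_adj :: "nat \<Rightarrow> 'a list \<Rightarrow> 'a list" where
  "swap_adj j xs = xs[j - 1 := xs ! j, j := xs ! (j - 1)]"

fun apply_action :: "action \<Rightarrow> 'a list \<Rightarrow> 'a list" where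
  "apply_action (Access i) xs = xs"
| "apply_action (Swp j) xs = swap_adj j xs"

fun valid_action :: "nat \<Rightarrow> action \<Rightarrow> bool" where
  "valid_action n (Access i) = (1 \<le> i \<and> i \<le> n)"
| "valid_action n (Swp j) = (1 \<le> j \<and> j < n)"

fun action_cost :: "action \<Rightarrow> nat" where
  "action_cost (Access i) = i"
| "action_cost (Swp j) = 1"

(* A schedule: a finite list of timed actions, in nondecreasing time order;
   actions with equal time are executed in list order. *)
type_synonym schedule = "(real \<times> action) list"

(* list configuration just before the k-th action (0-based) *)
definition conf :: "'a list \<Rightarrow> schedule \<Rightarrow> nat \<Rightarrow> 'a list" where
  "conf L s k = fold apply_action (take k (map snd s)) L"

definition sched_cost :: "schedule \<Rightarrow> nat" where
  "sched_cost s = sum_list (map (\<lambda>p. action_cost (snd p)) s)"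

definition feasible :: "'a list \<Rightarrow> 'a req list \<Rightarrow> schedule \<Rightarrow> bool" where
  "feasible L \<sigma> s \<longleftrightarrow>
     sorted (map fst s) \<and>
     (\<forall>p \<in> set s. valid_action (length L) (snd p)) \<and>
     (\<forall>r \<in> set \<sigma>. \<exists>k < length s. arr r \<le> fst (s ! k) \<and> fst (s ! k) \<le> dl r \<and>
         (\<exists>i. snd (s ! k) = Access i \<and> elem r \<in> set (take i (conf L s k))))"

definition OPT :: "'a list \<Rightarrow> 'a req list \<Rightarrow> nat" where
  "OPT L \<sigma> = (LEAST c. \<exists>s. feasible L \<sigma> s \<and> sched_cost s = c)"

(* state: (current list, set of served request indices, accumulated cost,
           set of indices of triggering requests).
   ch is the fixed rule choosing the triggering request among the pending
   requests for the triggering element whose deadline is the current time. *)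
definition alg_step :: "(nat set \<Rightarrow> nat) \<Rightarrow> 'a req list \<Rightarrow> real \<Rightarrow>
    'a list \<times> nat set \<times> nat \<times> nat set \<Rightarrow> 'a list \<times> nat set \<times> nat \<times> nat set" where
  "alg_step ch \<sigma> t st =
    (case st of (xs, served, c, trig) \<Rightarrow>
      (let P = {k. k < length \<sigma> \<and> k \<notin> served \<and> arr (\<sigma> ! k) \<le> t \<and> dl (\<sigma> ! k) = t} in
       if P = {} then st else
       (let i = Max ((\<lambda>k. pos xs (elem (\<sigma> ! k))) ` P);
            e = xs ! (i - 1);
            m = min (2 * i - 1) (length xs);
            newserved = {k. k < length \<sigma> \<and> k \<notin> served \<and> arr (\<sigma> ! k) \<le> t
                            \<and> pos xs (elem (\<sigma> ! k)) \<le> m};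
            tr = ch {k \<in> P. elem (\<sigma> ! k) = e}
        in (e # remove1 e xs, served \<union> newserved, c + m + (i - 1), insert tr trig))))"

definition alg_run :: "(nat set \<Rightarrow> nat) \<Rightarrow> 'a list \<Rightarrow> 'a req list \<Rightarrow>
    'a list \<times> nat set \<times> nat \<times> nat set" where
  "alg_run ch L \<sigma> = fold (alg_step ch \<sigma>) (sorted_list_of_set (dl ` set \<sigma>)) (L, {}, 0, {})"

definition ALG :: "(nat set \<Rightarrow> nat) \<Rightarrow> 'a list \<Rightarrow> 'a req list \<Rightarrow> nat" where
  "ALG ch L \<sigma> = fst (snd (snd (alg_run ch L \<sigma>)))"

definition triggering :: "(nat set \<Rightarrow> nat) \<Rightarrow> 'a list \<Rightarrow> 'a req list \<Rightarrow> nat set" where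
  "triggering ch L \<sigma> = snd (snd (snd (alg_run ch L \<sigma>)))"

end

theory Submission imports Defs begin

lemma pos_in:
  assumes "x \<in> set xs"
  shows "1 \<le> pos xs x \<and> pos xs x \<le> length xs \<and> xs ! (pos xs x - 1) = x"
proof -
  have l: "length (takeWhile (\<lambda>y. y \<noteq> x) xs) < length xs"
    using assms by (induct xs) auto
  have "\<not> (xs ! length (takeWhile (\<lambda>y. y \<noteq> x) xs) \<noteq> x)"
    using nth_length_takeWhile[OF l] .
  thus ?thesis using l unfolding pos_def by auto
qed

lemma pos_nth:
  assumes "distinct xs" "1 \<le> i" "i \<le> length xs"
  shows "pos xs (xs ! (i - 1)) = i"
proof -
  have "xs ! (i-1) \<in> set xs" using assms by auto
  from pos_in[OF this] have "xs ! (pos xs (xs ! (i - 1)) - 1) = xs ! (i-1)" "1 \<le> pos xs (xs ! (i - 1))"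
     "pos xs (xs ! (i - 1)) \<le> length xs" by auto
  moreover have "pos xs (xs ! (i - 1)) - 1 < length xs" "i - 1 < length xs"
    using calculation assms by auto
  ultimately have "pos xs (xs ! (i - 1)) - 1 = i - 1"
    using nth_eq_iff_index_eq[OF assms(1)] by blast
  thus ?thesis using \<open>1 \<le> pos xs (xs ! (i - 1))\<close> assms(2) by linarith
qed

lemma step_sim:
  fixes \<sigma> :: "'a req list" and I :: "nat list"
  assumes elems: "\<forall>k<length \<sigma>. elem (\<sigma>!k) \<in> set xs"
    and dist: "distinct xs"
    and rel: "\<forall>j<length I. (I!j \<in> S \<longleftrightarrow> j \<in> S')"
    and chp: "\<forall>S. finite S \<and> S\<noteq>{} \<longrightarrow> ch S \<in> S"
    and Iok: "\<forall>i\<in>set I. i < length \<sigma>"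
    and trsub: "snd (snd (snd (alg_step ch \<sigma> t (xs,S,c,Tr)))) \<subseteq> set I"
    and st1: "alg_step ch \<sigma> t (xs,S,c,Tr) = (xs1,S1,c1,Tr1)"
    and st2: "alg_step ch (map ((!) \<sigma>) I) t (xs,S',c,Tr') = (xs2,S2,c2,Tr2)"
  shows "xs2 = xs1 \<and> c2 = c1 \<and> (\<forall>j<length I. (I!j \<in> S1 \<longleftrightarrow> j \<in> S2)) \<and> distinct xs1 \<and> set xs1 = set xs"
proof -
  define P where "P = {k. k < length \<sigma> \<and> k \<notin> S \<and> arr (\<sigma> ! k) \<le> t \<and> dl (\<sigma> ! k) = t}"
  define P' where "P' = {k. k < length I \<and> k \<notin> S' \<and> arr (\<sigma> ! (I!k)) \<le> t \<and> dl (\<sigma> ! (I!k)) = t}"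
  have PP: "\<And>k. k \<in> P' \<Longrightarrow> I!k \<in> P" using rel Iok unfolding P_def P'_def by auto
    have P'eq: "{k. k < length (map ((!) \<sigma>) I) \<and> k \<notin> S' \<and> arr (map ((!) \<sigma>) I ! k) \<le> t \<and> dl (map ((!) \<sigma>) I ! k) = t} = P'"
      unfolding P'_def by auto
  show ?thesis
  proof (cases "P = {}")
    case True
    hence "P' = {}" using PP by blast
    have E1: "alg_step ch \<sigma> t (xs,S,c,Tr) = (xs,S,c,Tr)"
      unfolding alg_step_def using True[unfolded P_def] by simp
    have E2: "alg_step ch (map ((!) \<sigma>) I) t (xs,S',c,Tr') = (xs,S',c,Tr')"
      unfolding alg_step_def using \<open>P' = {}\<close>[unfolded P'eq[symmetric]] by (simp only: prod.case Let_def if_True) simp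
    show ?thesis using E1 E2 st1 st2 rel dist by auto
  next
    case False
    define f where "f = (\<lambda>k. pos xs (elem (\<sigma> ! k)))"
    define i where "i = Max (f ` P)"
    have finP: "finite P" unfolding P_def by auto
    have "i \<in> f ` P" unfolding i_def using finP False by (intro Max_in) auto
    then obtain k0 where k0: "k0 \<in> P" "f k0 = i" by auto
    have k0in: "elem (\<sigma>!k0) \<in> set xs" using elems k0 unfolding P_def by auto
    define e where "e = xs ! (i - 1)"
    have e0: "e = elem (\<sigma>!k0)" using pos_in[OF k0in] k0 unfolding e_def f_def by auto
    have ilen: "1 \<le> i" "i \<le> length xs" using pos_in[OF k0in] k0 unfolding f_def by auto
    define C where "C = {k \<in> P. elem (\<sigma> ! k) = e}"
    have kC: "k0 \<in> C" using k0 e0 unfolding C_def by auto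
    have "finite C" using finP unfolding C_def by auto
    hence "ch C \<in> C" using chp kC by blast
    define m where "m = min (2 * i - 1) (length xs)"
    have st1': "alg_step ch \<sigma> t (xs,S,c,Tr) = (e # remove1 e xs, S \<union> {k. k < length \<sigma> \<and> k \<notin> S \<and> arr (\<sigma> ! k) \<le> t
                            \<and> pos xs (elem (\<sigma> ! k)) \<le> m}, c + m + (i - 1), insert (ch C) Tr)"
      unfolding alg_step_def prod.case P_def[symmetric] Let_def f_def[symmetric] i_def[symmetric] e_def[symmetric] C_def[symmetric] m_def[symmetric]
      using False by simp
    have "ch C \<in> set I" using trsub st1' by auto
    then obtain j where j: "j < length I" "I!j = ch C" by (auto simp: in_set_conv_nth)
    have jP': "j \<in> P'" using j \<open>ch C \<in> C\<close> rel unfolding C_def P_def P'_def by auto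
    define f' where "f' = (\<lambda>k. pos xs (elem (map ((!) \<sigma>) I ! k)))"
    have f'f: "\<And>k. k \<in> P' \<Longrightarrow> f' k = f (I!k)" unfolding f'_def f_def P'_def by auto
    have sub: "f' ` P' \<subseteq> f ` P" using f'f PP by auto
    have finP': "finite P'" unfolding P'_def by auto
    have "f (ch C) = i" using \<open>ch C \<in> C\<close> pos_nth[OF dist ilen] unfolding C_def f_def e_def by auto
    hence "i \<in> f' ` P'" using jP' f'f j by force
    hence i': "Max (f' ` P') = i"
    proof -
      have a: "Max (f' ` P') \<le> i" unfolding i_def using \<open>i \<in> f' ` P'\<close> finP
        by (intro Max_mono[OF sub]) auto
      have b: "i \<le> Max (f' ` P')" using \<open>i \<in> f' ` P'\<close> finP' by (intro Max_ge) auto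
      show ?thesis using a b by simp
    qed
    have st2': "alg_step ch (map ((!) \<sigma>) I) t (xs,S',c,Tr') = (e # remove1 e xs, S' \<union> {k. k < length I \<and> k \<notin> S' \<and> arr (\<sigma> ! (I!k)) \<le> t
                            \<and> pos xs (elem (\<sigma> ! (I!k))) \<le> m}, c + m + (i - 1), insert (ch {k \<in> P'. elem (map ((!) \<sigma>) I ! k) = e}) Tr')"
      unfolding alg_step_def prod.case P'eq Let_def f'_def[symmetric] i' e_def[symmetric] m_def[symmetric]
      using jP' by (auto simp: f'_def)
    have ein: "e \<in> set xs" using ilen unfolding e_def by auto
    show ?thesis using st1 st2 st1' st2' rel Iok dist ein
      by (auto simp: set_remove1_eq)
  qed
qed


lemma step_cases:
  fixes \<sigma> :: "'a req list"
  assumes elems: "\<forall>k<length \<sigma>. elem (\<sigma>!k) \<in> set xs"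
    and chp: "\<forall>S. finite S \<and> S\<noteq>{} \<longrightarrow> ch S \<in> S"
  shows "({k. k < length \<sigma> \<and> k \<notin> S \<and> arr (\<sigma> ! k) \<le> t \<and> dl (\<sigma> ! k) = t} = {}
            \<and> alg_step ch \<sigma> t (xs,S,c,Tr) = (xs,S,c,Tr))
       \<or> ({k. k < length \<sigma> \<and> k \<notin> S \<and> arr (\<sigma> ! k) \<le> t \<and> dl (\<sigma> ! k) = t} \<noteq> {} \<and>
          (\<exists>tr<length \<sigma>. tr \<notin> S \<and> arr (\<sigma>!tr) \<le> t \<and> dl (\<sigma>!tr) = t \<and>
            snd (snd (snd (alg_step ch \<sigma> t (xs,S,c,Tr)))) = insert tr Tr) \<and>
          set (fst (alg_step ch \<sigma> t (xs,S,c,Tr))) = set xs \<and>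
          (distinct xs \<longrightarrow> distinct (fst (alg_step ch \<sigma> t (xs,S,c,Tr)))))"
proof -
  define P where "P = {k. k < length \<sigma> \<and> k \<notin> S \<and> arr (\<sigma> ! k) \<le> t \<and> dl (\<sigma> ! k) = t}"
  show ?thesis
  proof (cases "P = {}")
    case True
    have E1: "alg_step ch \<sigma> t (xs,S,c,Tr) = (xs,S,c,Tr)"
      unfolding alg_step_def using True[unfolded P_def] by simp
    thus ?thesis using True unfolding P_def by simp
  next
    case False
    define f where "f = (\<lambda>k. pos xs (elem (\<sigma> ! k)))"
    define i where "i = Max (f ` P)"
    have finP: "finite P" unfolding P_def by auto
    have "i \<in> f ` P" unfolding i_def using finP False by (intro Max_in) auto
    then obtain k0 where k0: "k0 \<in> P" "f k0 = i" by auto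
    have k0in: "elem (\<sigma>!k0) \<in> set xs" using elems k0 unfolding P_def by auto
    define e where "e = xs ! (i - 1)"
    have e0: "e = elem (\<sigma>!k0)" using pos_in[OF k0in] k0 unfolding e_def f_def by auto
    have ilen: "1 \<le> i" "i \<le> length xs" using pos_in[OF k0in] k0 unfolding f_def by auto
    define C where "C = {k \<in> P. elem (\<sigma> ! k) = e}"
    have kC: "k0 \<in> C" using k0 e0 unfolding C_def by auto
    have "finite C" using finP unfolding C_def by auto
    hence "ch C \<in> C" using chp kC by blast
    define m where "m = min (2 * i - 1) (length xs)"
    have st1': "alg_step ch \<sigma> t (xs,S,c,Tr) = (e # remove1 e xs, S \<union> {k. k < length \<sigma> \<and> k \<notin> S \<and> arr (\<sigma> ! k) \<le> t
                            \<and> pos xs (elem (\<sigma> ! k)) \<le> m}, c + m + (i - 1), insert (ch C) Tr)"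
      unfolding alg_step_def prod.case P_def[symmetric] Let_def f_def[symmetric] i_def[symmetric] e_def[symmetric] C_def[symmetric] m_def[symmetric]
      using False by simp
    have ein: "e \<in> set xs" using ilen unfolding e_def by auto
    have "ch C \<in> P" using \<open>ch C \<in> C\<close> unfolding C_def by auto
    then show ?thesis using False st1' ein unfolding P_def by (auto simp: set_remove1_eq)
  qed
qed

definition tr3 :: "'a list \<times> nat set \<times> nat \<times> nat set \<Rightarrow> nat set" where
  "tr3 st = snd (snd (snd st))"

lemma fold_inv:
  fixes \<sigma> :: "'a req list"
  assumes "\<forall>k<length \<sigma>. elem (\<sigma>!k) \<in> set xs" "distinct xs"
    and chp: "\<forall>S. finite S \<and> S\<noteq>{} \<longrightarrow> ch S \<in> S"
    and "fold (alg_step ch \<sigma>) ds (xs,S,c,Tr) = (xs1,S1,c1,Tr1)"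
  shows "distinct xs1 \<and> set xs1 = set xs \<and> Tr \<subseteq> Tr1 \<and> (Tr \<subseteq> {..<length \<sigma>} \<longrightarrow> Tr1 \<subseteq> {..<length \<sigma>})"
  using assms
proof (induction ds arbitrary: xs S c Tr)
  case Nil
  then show ?case by auto
next
  case (Cons t ds)
  obtain xs2 S2 c2 Tr2 where st: "alg_step ch \<sigma> t (xs,S,c,Tr) = (xs2,S2,c2,Tr2)"
    by (cases "alg_step ch \<sigma> t (xs,S,c,Tr)") auto
  have sc: "set xs2 = set xs \<and> distinct xs2 \<and> Tr \<subseteq> Tr2 \<and> (Tr \<subseteq> {..<length \<sigma>} \<longrightarrow> Tr2 \<subseteq> {..<length \<sigma>})"
    using step_cases[OF Cons.prems(1) chp, of S t c Tr] st Cons.prems(2) by auto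
  have "fold (alg_step ch \<sigma>) ds (xs2,S2,c2,Tr2) = (xs1,S1,c1,Tr1)" using Cons.prems(4) st by simp
  from Cons.IH[OF _ _ chp this] sc Cons.prems(1) show ?case by auto
qed

lemma fold_sim:
  fixes \<sigma> :: "'a req list" and I :: "nat list"
  assumes elems: "\<forall>k<length \<sigma>. elem (\<sigma>!k) \<in> set xs"
    and dist: "distinct xs"
    and rel: "\<forall>j<length I. (I!j \<in> S \<longleftrightarrow> j \<in> S')"
    and chp: "\<forall>S. finite S \<and> S\<noteq>{} \<longrightarrow> ch S \<in> S"
    and Iok: "\<forall>i\<in>set I. i < length \<sigma>"
    and trsub: "tr3 (fold (alg_step ch \<sigma>) ds (xs,S,c,Tr)) \<subseteq> set I"
  shows "fst (snd (snd (fold (alg_step ch \<sigma>) ds (xs,S,c,Tr))))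
       = fst (snd (snd (fold (alg_step ch (map ((!) \<sigma>) I)) ds (xs,S',c,Tr'))))"
  using elems dist rel trsub
proof (induction ds arbitrary: xs S S' c Tr Tr')
  case Nil
  then show ?case by simp
next
  case (Cons t ds)
  obtain xs1 S1 c1 Tr1 where st1: "alg_step ch \<sigma> t (xs,S,c,Tr) = (xs1,S1,c1,Tr1)"
    by (cases "alg_step ch \<sigma> t (xs,S,c,Tr)") auto
  obtain xs2 S2 c2 Tr2 where st2: "alg_step ch (map ((!) \<sigma>) I) t (xs,S',c,Tr') = (xs2,S2,c2,Tr2)"
    by (cases "alg_step ch (map ((!) \<sigma>) I) t (xs,S',c,Tr')") auto
  obtain xs3 S3 c3 Tr3 where st3: "fold (alg_step ch \<sigma>) ds (xs1,S1,c1,Tr1) = (xs3,S3,c3,Tr3)"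
    by (cases "fold (alg_step ch \<sigma>) ds (xs1,S1,c1,Tr1)") auto
  have sc: "set xs1 = set xs \<and> distinct xs1"
    using step_cases[OF Cons.prems(1) chp, of S t c Tr] st1 Cons.prems(2) by auto
  have "Tr1 \<subseteq> Tr3" using fold_inv[OF _ _ chp st3] sc Cons.prems(1) by auto
  moreover have "Tr3 \<subseteq> set I" using Cons.prems(4) st1 st3 by (simp add: tr3_def)
  ultimately have "tr3 (alg_step ch \<sigma> t (xs,S,c,Tr)) \<subseteq> set I" using st1 by (simp add: tr3_def)
  hence sim: "xs2 = xs1 \<and> c2 = c1 \<and> (\<forall>j<length I. (I!j \<in> S1 \<longleftrightarrow> j \<in> S2)) \<and> distinct xs1 \<and> set xs1 = set xs"
    using step_sim[OF Cons.prems(1,2,3) chp Iok _ st1 st2] by (simp add: tr3_def)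
  have "fst (snd (snd (fold (alg_step ch \<sigma>) ds (xs1,S1,c1,Tr1))))
       = fst (snd (snd (fold (alg_step ch (map ((!) \<sigma>) I)) ds (xs1,S2,c1,Tr2))))"
    using Cons.IH[of xs1 S1 S2 c1 Tr1 Tr2] sim Cons.prems(1) Cons.prems(4) st1 by simp
  then show ?case using st1 st2 sim by simp
qed


lemma step_id:
  assumes "t \<notin> dl ` set \<tau>"
  shows "alg_step ch \<tau> t st = st"
proof -
  have "{k. k < length \<tau> \<and> k \<notin> S \<and> arr (\<tau> ! k) \<le> t \<and> dl (\<tau> ! k) = t} = {}" for S
    using assms by (auto simp: in_set_conv_nth) (metis image_eqI nth_mem)
  thus ?thesis unfolding alg_step_def by (cases st) (simp add: Let_def)
qed

lemma fold_filter:
  "fold (alg_step ch \<tau>) ds st = fold (alg_step ch \<tau>) (filter (\<lambda>t. t \<in> dl ` set \<tau>) ds) st"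
  by (induction ds arbitrary: st) (auto simp: step_id)

lemma filter_sorted_set:
  fixes A B :: "real set"
  assumes "A \<subseteq> B" "finite B"
  shows "filter (\<lambda>x. x \<in> A) (sorted_list_of_set B) = sorted_list_of_set A"
proof -
  have fA: "finite A" using assms finite_subset by blast
  have "sorted_wrt (<) (filter (\<lambda>x. x \<in> A) (sorted_list_of_set B))"
    using sorted_list_of_set.strict_sorted_key_list_of_set[of B] by (simp add: sorted_wrt_filter)
  moreover have "sorted_wrt (<) (sorted_list_of_set A)" by simp
  moreover have "set (filter (\<lambda>x. x \<in> A) (sorted_list_of_set B)) = A" using assms by auto
  ultimately show ?thesis using fA by (metis set_sorted_list_of_set strict_sorted_equal)
qed

lemma nths_conv: "nths xs A = map ((!) xs) (filter (\<lambda>i. i \<in> A) [0..<length xs])"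
proof (induction xs rule: rev_induct)
  case Nil
  then show ?case by simp
next
  case (snoc x xs)
  have "map ((!) (xs @ [x])) (filter (\<lambda>i. i \<in> A) [0..<length xs]) = map ((!) xs) (filter (\<lambda>i. i \<in> A) [0..<length xs])"
    by (intro map_cong) (auto simp: nth_append)
  then show ?case using snoc by (simp add: nths_append)
qed

lemma fold_access:
  "\<forall>a\<in>set as. \<exists>i. a = Access i \<Longrightarrow> fold apply_action as L = L"
  by (induction as arbitrary: L) auto

lemma feasible_ex:
  fixes \<sigma> :: "'a req list"
  assumes "\<sigma> \<noteq> []" "\<forall>r \<in> set \<sigma>. elem r \<in> set L \<and> arr r \<le> dl r"
  shows "\<exists>s. feasible L \<sigma> s"
proof -
  define D where "D = sorted_list_of_set (dl ` set \<sigma>)"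
  define s where "s = map (\<lambda>t. (t, Access (length L))) D"
  have Lne: "1 \<le> length L" using assms by (cases \<sigma>) (auto simp: Suc_le_eq)
  have "feasible L \<sigma> s"
    unfolding feasible_def
  proof (intro conjI ballI)
    show "sorted (map fst s)" unfolding s_def D_def by (simp add: o_def)
    show "valid_action (length L) (snd p)" if "p \<in> set s" for p using that Lne unfolding s_def by auto
    fix r assume r: "r \<in> set \<sigma>"
    have "dl r \<in> set D" unfolding D_def using r by auto
    then obtain k where k: "k < length D" "D ! k = dl r" by (auto simp: in_set_conv_nth)
    have "\<forall>a\<in>set (take k (map snd s)). \<exists>i. a = Access i"
      unfolding s_def by (auto dest!: in_set_takeD)
    hence "conf L s k = L" unfolding conf_def by (rule fold_access)
    then show "\<exists>k<length s. arr r \<le> fst (s ! k) \<and> fst (s ! k) \<le> dl r \<and>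
         (\<exists>i. snd (s ! k) = Access i \<and> elem r \<in> set (take i (conf L s k)))"
      using k r assms(2) by (intro exI[of _ k]) (auto simp: s_def)
  qed
  thus ?thesis by blast
qed

lemma feasible_sub:
  "feasible L \<sigma> s \<Longrightarrow> set \<tau> \<subseteq> set \<sigma> \<Longrightarrow> feasible L \<tau> s"
  unfolding feasible_def by blast

lemma feasible_pos:
  assumes "feasible L \<sigma> s" "\<sigma> \<noteq> []"
  shows "1 \<le> sched_cost s"
proof -
  obtain r where r: "r \<in> set \<sigma>" using assms by (cases \<sigma>) auto
  then obtain k i where k: "k < length s" "snd (s ! k) = Access i" "elem r \<in> set (take i (conf L s k))"
    using assms(1) unfolding feasible_def by blast
  have "i \<ge> 1" using k(3) by (cases i) auto
  have "action_cost (snd (s!k)) \<in> set (map (\<lambda>p. action_cost (snd p)) s)"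
    using k(1) by (metis (no_types, lifting) length_map nth_map nth_mem)
  hence "action_cost (snd (s!k)) \<le> sched_cost s" unfolding sched_cost_def by (intro member_le_sum_list) auto
  thus ?thesis using k \<open>i \<ge> 1\<close> by simp
qed


lemma fold_mono_tr:
  fixes \<sigma> :: "'a req list"
  assumes "\<forall>k<length \<sigma>. elem (\<sigma>!k) \<in> set xs" "distinct xs"
    and chp: "\<forall>S. finite S \<and> S\<noteq>{} \<longrightarrow> ch S \<in> S"
  shows "Tr \<subseteq> tr3 (fold (alg_step ch \<sigma>) ds (xs,S,c,Tr)) \<and>
         (Tr \<subseteq> {..<length \<sigma>} \<longrightarrow> tr3 (fold (alg_step ch \<sigma>) ds (xs,S,c,Tr)) \<subseteq> {..<length \<sigma>}) \<and>
         distinct (fst (fold (alg_step ch \<sigma>) ds (xs,S,c,Tr))) \<and>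
         set (fst (fold (alg_step ch \<sigma>) ds (xs,S,c,Tr))) = set xs"
  using fold_inv[OF assms, of ds S c Tr] unfolding tr3_def
  by (cases "fold (alg_step ch \<sigma>) ds (xs,S,c,Tr)") auto

lemma fold_empty_tr:
  fixes \<sigma> :: "'a req list"
  assumes "\<forall>k<length \<sigma>. elem (\<sigma>!k) \<in> set xs" "distinct xs"
    and chp: "\<forall>S. finite S \<and> S\<noteq>{} \<longrightarrow> ch S \<in> S"
    and "tr3 (fold (alg_step ch \<sigma>) ds (xs,S,c,{})) = {}"
  shows "fold (alg_step ch \<sigma>) ds (xs,S,c,{}) = (xs,S,c,{})"
  using assms
proof (induction ds)
  case Nil
  then show ?case by simp
next
  case (Cons t ds)
  show ?case
  proof (cases "alg_step ch \<sigma> t (xs,S,c,{}) = (xs,S,c,{})")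
    case True
    then show ?thesis using Cons by simp
  next
    case False
    then obtain tr where tr: "tr3 (alg_step ch \<sigma> t (xs,S,c,{})) = {tr}"
      and inv: "set (fst (alg_step ch \<sigma> t (xs,S,c,{}))) = set xs" "distinct (fst (alg_step ch \<sigma> t (xs,S,c,{})))"
      using step_cases[OF Cons.prems(1) chp, of S t c "{}"] Cons.prems(2) unfolding tr3_def by auto
    obtain xs1 S1 c1 Tr1 where st: "alg_step ch \<sigma> t (xs,S,c,{}) = (xs1,S1,c1,Tr1)"
      by (cases "alg_step ch \<sigma> t (xs,S,c,{})") auto
    have d1: "distinct xs1" and s1: "set xs1 = set xs" using inv st by auto
    have e1: "\<forall>k<length \<sigma>. elem (\<sigma>!k) \<in> set xs1" using s1 Cons.prems(1) by simp
    have "Tr1 \<subseteq> tr3 (fold (alg_step ch \<sigma>) ds (xs1,S1,c1,Tr1))"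
      using fold_mono_tr[OF e1 d1 chp, where ds=ds and S=S1 and c=c1 and Tr=Tr1] by blast
    then show ?thesis using Cons.prems(4) st tr by (simp add: tr3_def)
  qed
qed

theorem mainTheorem3:
  fixes L :: "'a list" and \<sigma> :: "'a req list" and ch :: "nat set \<Rightarrow> nat"
  assumes "distinct L"
    and "\<sigma> \<noteq> []"
    and "\<forall>r \<in> set \<sigma>. elem r \<in> set L \<and> arr r \<le> dl r"
    and "\<forall>S. finite S \<and> S \<noteq> {} \<longrightarrow> ch S \<in> S"
  shows "real (ALG ch L \<sigma>) / real (OPT L \<sigma>)
         \<le> real (ALG ch L (nths \<sigma> (triggering ch L \<sigma>)))
             / real (OPT L (nths \<sigma> (triggering ch L \<sigma>)))"
proof -
  note chp = assms(4)
  define D where "D = sorted_list_of_set (dl ` set \<sigma>)"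
  define T where "T = triggering ch L \<sigma>"
  define \<sigma>' where "\<sigma>' = nths \<sigma> T"
  define I where "I = filter (\<lambda>i. i \<in> T) [0..<length \<sigma>]"
  have elems: "\<forall>k<length \<sigma>. elem (\<sigma>!k) \<in> set L" using assms(3) by auto
  have Tdef: "T = tr3 (fold (alg_step ch \<sigma>) D (L,{},0,{}))"
    unfolding T_def triggering_def alg_run_def D_def tr3_def ..
  have "tr3 (fold (alg_step ch \<sigma>) D (L,{},0,{})) \<subseteq> {..<length \<sigma>}"
    using fold_mono_tr[OF elems assms(1) chp, where ds=D and S="{}" and c=0 and Tr="{}"] by blast
  hence Tsub: "T \<subseteq> {..<length \<sigma>}" using Tdef by simp
  have setI: "set I = T" using Tsub unfolding I_def by auto
  have \<sigma>'eq: "\<sigma>' = map ((!) \<sigma>) I" unfolding \<sigma>'_def I_def by (rule nths_conv)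
  have Iok: "\<forall>i\<in>set I. i < length \<sigma>" unfolding I_def by auto
  have sub: "dl ` set \<sigma>' \<subseteq> dl ` set \<sigma>" unfolding \<sigma>'_def by (intro image_mono set_nths_subset)
  have F: "filter (\<lambda>t. t \<in> dl ` set \<sigma>') D = sorted_list_of_set (dl ` set \<sigma>')"
    unfolding D_def by (rule filter_sorted_set[OF sub]) simp
  have "fold (alg_step ch \<sigma>') D (L,{},0,{}) = fold (alg_step ch \<sigma>') (filter (\<lambda>t. t \<in> dl ` set \<sigma>') D) (L,{},0,{})"
    by (rule fold_filter)
  also have "\<dots> = fold (alg_step ch \<sigma>') (sorted_list_of_set (dl ` set \<sigma>')) (L,{},0,{})"
    unfolding F ..
  finally have A': "ALG ch L \<sigma>' = fst (snd (snd (fold (alg_step ch \<sigma>') D (L,{},0,{}))))"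
    unfolding ALG_def alg_run_def by simp
  have A: "ALG ch L \<sigma> = fst (snd (snd (fold (alg_step ch \<sigma>) D (L,{},0,{}))))"
    unfolding ALG_def alg_run_def D_def ..
  have "ALG ch L \<sigma> = ALG ch L \<sigma>'"
    unfolding A A' unfolding \<sigma>'eq
  proof (rule fold_sim[OF elems assms(1) _ chp Iok])
    show "tr3 (fold (alg_step ch \<sigma>) D (L, {}, 0, {})) \<subseteq> set I" using Tdef setI by simp
  qed simp
  have "T \<noteq> {}"
  proof
    assume Te: "T = {}"
    define t0 where "t0 = dl (\<sigma>!0)"
    have "t0 \<in> set D" unfolding D_def t0_def using assms(2) by auto
    then obtain as bs where Dsplit: "D = as @ t0 # bs" by (meson split_list)
    define st where "st = fold (alg_step ch \<sigma>) as (L,{},0,{})"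
    have "distinct (fst st) \<and> set (fst st) = set L"
      using fold_mono_tr[OF elems assms(1) chp, where ds=as and S="{}" and c=0 and Tr="{}"] unfolding st_def by blast
    hence inv: "distinct (fst st)" "set (fst st) = set L" by auto
    obtain xs1 S1 c1 Tr1 where st1: "st = (xs1,S1,c1,Tr1)" by (cases st) auto
    have e1: "\<forall>k<length \<sigma>. elem (\<sigma>!k) \<in> set xs1" using elems inv st1 by auto
    have "T = tr3 (fold (alg_step ch \<sigma>) (t0 # bs) (xs1,S1,c1,Tr1))"
      using Tdef Dsplit st_def st1 by simp
    moreover have d1: "distinct xs1" using inv st1 by simp
    moreover have "Tr1 \<subseteq> tr3 (fold (alg_step ch \<sigma>) (t0 # bs) (xs1,S1,c1,Tr1))"
      using fold_mono_tr[OF e1 d1 chp, where ds="t0#bs" and S=S1 and c=c1 and Tr=Tr1] by blast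
    ultimately have "Tr1 = {}" using Te by auto
    moreover have "fold (alg_step ch \<sigma>) as (L,{},0,{}) = (xs1,S1,c1,Tr1)" using st_def st1 by simp
    ultimately have "tr3 (fold (alg_step ch \<sigma>) as (L,{},0,{})) = {}" by (simp add: tr3_def)
    hence st0: "st = (L,{},0,{})" unfolding st_def by (rule fold_empty_tr[OF elems assms(1) chp])
    have P0: "0 \<in> {k. k < length \<sigma> \<and> k \<notin> {} \<and> arr (\<sigma> ! k) \<le> t0 \<and> dl (\<sigma> ! k) = t0}"
      using assms(2,3) unfolding t0_def by (cases \<sigma>) auto
    obtain tr where tr: "tr \<in> tr3 (alg_step ch \<sigma> t0 (L,{},0,{}))"
      using step_cases[OF elems chp, of "{}" t0 0 "{}"] P0 unfolding tr3_def by auto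
    obtain xs2 S2 c2 Tr2 where st2: "alg_step ch \<sigma> t0 (L,{},0,{}) = (xs2,S2,c2,Tr2)"
      by (cases "alg_step ch \<sigma> t0 (L,{},0,{})") auto
    have inv2: "set xs2 = set L" "distinct xs2"
      using step_cases[OF elems chp, of "{}" t0 0 "{}"] P0 st2 assms(1) by auto
    have "T = tr3 (fold (alg_step ch \<sigma>) bs (xs2,S2,c2,Tr2))"
      using Tdef Dsplit st_def st0 st2 by simp
    moreover have e2: "\<forall>k<length \<sigma>. elem (\<sigma>!k) \<in> set xs2" using inv2(1) elems by simp
    moreover have "Tr2 \<subseteq> tr3 (fold (alg_step ch \<sigma>) bs (xs2,S2,c2,Tr2))"
      using fold_mono_tr[OF e2 inv2(2) chp, where ds=bs and S=S2 and c=c2 and Tr=Tr2] by blast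
    ultimately show False using Te tr st2 by (auto simp: tr3_def)
  qed
  hence "\<sigma>' \<noteq> []" using setI \<sigma>'eq by auto
  obtain s0 where "feasible L \<sigma> s0" using feasible_ex[OF assms(2,3)] by blast
  hence ex1: "\<exists>c s. feasible L \<sigma> s \<and> sched_cost s = c" by blast
  have "\<exists>s. feasible L \<sigma> s \<and> sched_cost s = OPT L \<sigma>" unfolding OPT_def by (rule LeastI_ex[OF ex1])
  then obtain s1 where s1: "feasible L \<sigma> s1" "sched_cost s1 = OPT L \<sigma>" by blast
  have s1': "feasible L \<sigma>' s1" by (rule feasible_sub[OF s1(1)]) (unfold \<sigma>'_def, rule set_nths_subset)
  have le: "OPT L \<sigma>' \<le> OPT L \<sigma>" unfolding OPT_def[of L \<sigma>']
    by (rule Least_le) (use s1' s1(2) in blast)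
  have ex2: "\<exists>c s. feasible L \<sigma>' s \<and> sched_cost s = c" using s1' by blast
  have "\<exists>s. feasible L \<sigma>' s \<and> sched_cost s = OPT L \<sigma>'" unfolding OPT_def by (rule LeastI_ex[OF ex2])
  then obtain s2 where s2: "feasible L \<sigma>' s2" "sched_cost s2 = OPT L \<sigma>'" by blast
  have pos: "1 \<le> OPT L \<sigma>'" using feasible_pos[OF s2(1) \<open>\<sigma>' \<noteq> []\<close>] s2(2) by simp
  have "real (ALG ch L \<sigma>') / real (OPT L \<sigma>) \<le> real (ALG ch L \<sigma>') / real (OPT L \<sigma>')"
    using le pos by (intro divide_left_mono) auto
  thus ?thesis using \<open>ALG ch L \<sigma> = ALG ch L \<sigma>'\<close> unfolding \<sigma>'_def T_def by simp
qed

end
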